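(* Let $\varepsilon>0$ be a given security threshold (written $\mathsf{negl}(\lambda)$ in the paper) and let $\eta\in\mathbb{Z}^+$ satisfy $1/\eta<\varepsilon$. In the setting described in the context, if \[ \frac{2\,\lambda_{\max}(M_c'')}{\lambda_{\min}(M_o')}\;\le\;\eta, \] then both $M_f^{(0)}$ and $M_f^{(1)}$ are density matrices.
   Context: Let $d_1\ge d_2\ge 1$ be integers, $\mathcal H_M=(\mathbb C^2)^{\otimes d_1}$, $\mathcal H_{M_c}=(\mathbb C^2)^{\otimes d_2}$. For $n\ge 1$ and $k\in\{0,1\}^{2n}$ let $U_k=\bigotimes_{j=1}^{n}X^{k_{2j-1}}Z^{k_{2j}}$ with $X,Z$ the Pauli matrices. Let $M_o$ be a strictly positive definite density matrix on $\mathcal H_M$ and $M_c$ a density matrix on $\mathcal H_{M_c}$. For keys $k\in\{0,1\}^{2d_1}$, $k'\in\{0,1\}^{2d_2}$ put $M_o'=U_kM_oU_k^\dagger$, $M_c'=U_{k'}M_cU_{k'}^\dagger$, let $V|\psi\rangle=|\psi\rangle\otimes|0\rangle^{\otimes(d_1-d_2)}$ (isometry $\mathcal H_{M_c}\to\mathcal H_M$) and $M_c''=VM_c'V^\dagger$. On $\mathbb C^2\otimes\mathcal H_M$ (blocks w.r.t. the first qubit) \[ M_a^{(0)}=\begin{pmatrix}\tfrac12M_o'&0\\0&\tfrac12M_o'\end{pmatrix},\qquad M_a^{(1)}=\begin{pmatrix}\tfrac12M_o'&\tfrac1\eta M_c''\\ \tfrac1\eta (M_c'')^\dagger&\tfrac12M_o'\end{pmatrix},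 \] and $M_f^{(b)}=U_\sigma M_a^{(b)}U_\sigma^\dagger$ for a $2^{d_1+1}\times 2^{d_1+1}$ permutation matrix $U_\sigma$. $\lambda_{\min}(M_o')$ and $\lambda_{\max}(M_c'')$ denote the smallest eigenvalue of $M_o'$ and the largest eigenvalue of $M_c''$ (on their supports). *)

theory Defs
  imports "Jordan_Normal_Form.Schur_Decomposition" "Jordan_Normal_Form.Spectral_Radius"
    "HOL-Combinatorics.Permutations"
begin

definition mtrace :: "complex mat \<Rightarrow> complex" where
  "mtrace A = (\<Sum>i<dim_row A. A $$ (i,i))"

definition psd_mat :: "nat \<Rightarrow> complex mat \<Rightarrow> bool" where
  "psd_mat n A \<longleftrightarrow> A \<in> carrier_mat n n \<and> mat_adjoint A = A \<and>
     (\<forall>v \<in> carrier_vec n. 0 \<le> conjugate v \<bullet> (A *\<^sub>v v))"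

definition pd_mat :: "nat \<Rightarrow> complex mat \<Rightarrow> bool" where
  "pd_mat n A \<longleftrightarrow> A \<in> carrier_mat n n \<and> mat_adjoint A = A \<and>
     (\<forall>v \<in> carrier_vec n. v \<noteq> 0\<^sub>v n \<longrightarrow> 0 < conjugate v \<bullet> (A *\<^sub>v v))"

definition density_mat :: "nat \<Rightarrow> complex mat \<Rightarrow> bool" where
  "density_mat n A \<longleftrightarrow> psd_mat n A \<and> mtrace A = 1"

(* smallest / largest eigenvalue on the support (i.e. among nonzero eigenvalues) *)
definition lambda_min :: "complex mat \<Rightarrow> real" where
  "lambda_min A = Min {x::real. x \<noteq> 0 \<and> eigenvalue A (complex_of_real x)}"

definition lambda_max :: "complex mat \<Rightarrow> real" where
  "lambda_max A = Max {x::real. x \<noteq> 0 \<and> eigenvalue A (complex_of_real x)}"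

(* Kronecker (tensor) product; first factor = most significant index *)
definition kron :: "complex mat \<Rightarrow> complex mat \<Rightarrow> complex mat" where
  "kron A B = mat (dim_row A * dim_row B) (dim_col A * dim_col B)
     (\<lambda>(i,j). A $$ (i div dim_row B, j div dim_col B) * B $$ (i mod dim_row B, j mod dim_col B))"

definition pauli_X :: "complex mat" where
  "pauli_X = mat 2 2 (\<lambda>(i,j). if i \<noteq> j then 1 else 0)"

definition pauli_Z :: "complex mat" where
  "pauli_Z = mat 2 2 (\<lambda>(i,j). if i = j then (if i = 0 then 1 else -1) else 0)"

fun pauli_op :: "bool list \<Rightarrow> complex mat" where
  "pauli_op [] = 1\<^sub>m 1"
| "pauli_op [a] = 1\<^sub>m 1"
| "pauli_op (a # b # ks) =
     kron ((if a then pauli_X else 1\<^sub>m 2) * (if b then pauli_Z else 1\<^sub>m 2)) (pauli_op ks)"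

definition ket0 :: "nat \<Rightarrow> complex mat" where
  "ket0 m = mat (2^m) 1 (\<lambda>(i,j). if i = 0 then 1 else 0)"

definition iso_V :: "nat \<Rightarrow> nat \<Rightarrow> complex mat" where
  "iso_V d1 d2 = kron (1\<^sub>m (2^d2)) (ket0 (d1 - d2))"

(* permutation matrix: U_sigma e_j = e_{sigma j} *)
definition perm_mat :: "nat \<Rightarrow> (nat \<Rightarrow> nat) \<Rightarrow> complex mat" where
  "perm_mat N \<sigma> = mat N N (\<lambda>(i,j). if i = \<sigma> j then 1 else 0)"

end

theory Submission
  imports Defs "HOL-Analysis.Function_Topology" "HOL-Analysis.Topology_Euclidean_Space"
begin

no_notation vec_nth (infixl "$" 90)
no_notation inner (infix "\<bullet>" 70)

lemma adj_dims[simp]: "dim_row (mat_adjoint A) = dim_col A" "dim_col (mat_adjoint A) = dim_row A"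
  unfolding mat_adjoint_def by auto
lemma adj_index[simp]: "i < dim_col A \<Longrightarrow> j < dim_row A \<Longrightarrow> mat_adjoint A $$ (i,j) = cnj (A $$ (j,i))"
  unfolding mat_adjoint_def mat_of_rows_def by simp
lemma adj_carrier[simp]: "A \<in> carrier_mat n m \<Longrightarrow> mat_adjoint A \<in> carrier_mat m n"
  by (intro carrier_matI) (simp_all add: carrier_matD)
lemma adj_adj[simp]: "mat_adjoint (mat_adjoint (A::complex mat)) = A"
proof (rule eq_matI)
  fix i j assume "i < dim_row A" "j < dim_col A"
  then show "mat_adjoint (mat_adjoint A) $$ (i, j) = A $$ (i, j)" by simp
qed simp_all
lemma adj_smult: "mat_adjoint (c \<cdot>\<^sub>m (A::complex mat)) = cnj c \<cdot>\<^sub>m mat_adjoint A"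
proof (rule eq_matI)
  fix i j assume "i < dim_row (cnj c \<cdot>\<^sub>m mat_adjoint A)" "j < dim_col (cnj c \<cdot>\<^sub>m mat_adjoint A)"
  then show "mat_adjoint (c \<cdot>\<^sub>m A) $$ (i, j) = (cnj c \<cdot>\<^sub>m mat_adjoint A) $$ (i, j)" by simp
qed simp_all


lemma adj_zero[simp]: "mat_adjoint (0\<^sub>m n m :: complex mat) = 0\<^sub>m m n"
proof (rule eq_matI)
  fix i j assume "i < dim_row (0\<^sub>m m n :: complex mat)" "j < dim_col (0\<^sub>m m n :: complex mat)"
  then show "mat_adjoint (0\<^sub>m n m :: complex mat) $$ (i, j) = (0\<^sub>m m n :: complex mat) $$ (i, j)" by simp
qed simp_all

lemma adj_one[simp]: "mat_adjoint (1\<^sub>m n :: complex mat) = 1\<^sub>m n"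
proof (rule eq_matI)
  fix i j assume "i < dim_row (1\<^sub>m n :: complex mat)" "j < dim_col (1\<^sub>m n :: complex mat)"
  then show "mat_adjoint (1\<^sub>m n :: complex mat) $$ (i, j) = (1\<^sub>m n :: complex mat) $$ (i, j)" by simp
qed simp_all

lemma adj_mult: assumes A: "A \<in> carrier_mat n m" and B: "B \<in> carrier_mat m p"
  shows "mat_adjoint (A * B) = mat_adjoint B * mat_adjoint (A::complex mat)"
proof (rule eq_matI)
  fix i j assume i: "i < dim_row (mat_adjoint B * mat_adjoint A)" and j: "j < dim_col (mat_adjoint B * mat_adjoint A)"
  have i': "i < p" and j': "j < n" using i j A B by auto
  have "mat_adjoint (A * B) $$ (i, j) = cnj ((A * B) $$ (j, i))" using i' j' A B by simp
  also have "\<dots> = cnj (\<Sum>k<m. A $$ (j,k) * B $$ (k,i))"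
    using i' j' A B by (simp add: scalar_prod_def atLeast0LessThan)
  also have "\<dots> = (\<Sum>k<m. cnj (B $$ (k,i)) * cnj (A $$ (j,k)))"
    by (simp add: cnj_sum mult.commute)
  also have "\<dots> = (mat_adjoint B * mat_adjoint A) $$ (i, j)"
    using i' j' A B by (simp add: scalar_prod_def atLeast0LessThan)
  finally show "mat_adjoint (A * B) $$ (i, j) = (mat_adjoint B * mat_adjoint A) $$ (i, j)" .
qed (use A B in simp_all)

lemma adj_four_block: assumes "A \<in> carrier_mat n n" "B \<in> carrier_mat n n" "C \<in> carrier_mat n n" "D \<in> carrier_mat n n"
  shows "mat_adjoint (four_block_mat A B C (D::complex mat)) =
     four_block_mat (mat_adjoint A) (mat_adjoint C) (mat_adjoint B) (mat_adjoint D)"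
proof -
  have d: "dim_row A = n" "dim_col A = n" "dim_row B = n" "dim_col B = n"
     "dim_row C = n" "dim_col C = n" "dim_row D = n" "dim_col D = n" using assms by auto
  show ?thesis
  proof (rule eq_matI)
    fix i j assume i: "i < dim_row (four_block_mat (mat_adjoint A) (mat_adjoint C) (mat_adjoint B) (mat_adjoint D))"
      and j: "j < dim_col (four_block_mat (mat_adjoint A) (mat_adjoint C) (mat_adjoint B) (mat_adjoint D))"
    then have i': "i < n + n" and j': "j < n + n" using d by auto
    have e: "mat_adjoint (four_block_mat A B C D) $$ (i, j) = cnj (four_block_mat A B C D $$ (j,i))"
      using i' j' d by simp
    show "mat_adjoint (four_block_mat A B C D) $$ (i, j) =
       four_block_mat (mat_adjoint A) (mat_adjoint C) (mat_adjoint B) (mat_adjoint D) $$ (i, j)"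
      unfolding e using i' j' d by (cases "i < n"; cases "j < n") simp_all
  qed (simp_all add: d)
qed

lemma sprod_sum: assumes "v \<in> carrier_vec n" "w \<in> carrier_vec n"
  shows "conjugate v \<bullet> w = (\<Sum>i<n. cnj (v$i) * (w$i :: complex))"
  using assms by (simp add: scalar_prod_def atLeast0LessThan)

lemma qf_sum: assumes "A \<in> carrier_mat n m" "u \<in> carrier_vec n" "w \<in> carrier_vec m"
  shows "conjugate u \<bullet> (A *\<^sub>v w) = (\<Sum>i<n. cnj (u$i) * (\<Sum>j<m. A $$ (i,j) * (w$j :: complex)))"
  using assms by (simp add: scalar_prod_def atLeast0LessThan)

lemma sprod_adj: assumes A: "A \<in> carrier_mat n m" and u: "u \<in> carrier_vec n" and w: "w \<in> carrier_vec m"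
  shows "conjugate u \<bullet> (A *\<^sub>v w) = conjugate (mat_adjoint A *\<^sub>v u) \<bullet> (w :: complex Matrix.vec)"
proof -
  have "conjugate u \<bullet> (A *\<^sub>v w) = (\<Sum>i<n. cnj (u$i) * (\<Sum>j<m. A $$ (i,j) * w$j))"
    by (rule qf_sum[OF A u w])
  also have "\<dots> = (\<Sum>i<n. \<Sum>j<m. cnj (u$i) * A $$ (i,j) * w$j)"
    by (simp add: sum_distrib_left mult.assoc)
  also have "\<dots> = (\<Sum>j<m. \<Sum>i<n. cnj (u$i) * A $$ (i,j) * w$j)"
    by (rule sum.swap)
  also have "\<dots> = (\<Sum>j<m. cnj ((mat_adjoint A *\<^sub>v u) $ j) * w $ j)"
  proof (rule sum.cong[OF refl])
    fix j assume "j \<in> {..<m}"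
    then have j: "j < m" by simp
    have "(mat_adjoint A *\<^sub>v u) $ j = (\<Sum>i<n. cnj (A $$ (i,j)) * u $ i)"
      using j A u by (simp add: scalar_prod_def atLeast0LessThan)
    then show "(\<Sum>i<n. cnj (u$i) * A $$ (i,j) * w$j) = cnj ((mat_adjoint A *\<^sub>v u) $ j) * w $ j"
      by (simp add: cnj_sum sum_distrib_right sum_distrib_left mult_ac)
  qed
  also have "\<dots> = conjugate (mat_adjoint A *\<^sub>v u) \<bullet> w"
    using sprod_sum[OF mult_mat_vec_carrier[OF adj_carrier[OF A] u] w] by simp
  finally show ?thesis .
qed

lemma sprod_cnj: assumes v: "v \<in> carrier_vec n" and w: "w \<in> carrier_vec n"
  shows "cnj (conjugate v \<bullet> w) = conjugate w \<bullet> (v :: complex Matrix.vec)"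
  unfolding sprod_sum[OF v w] sprod_sum[OF w v] by (simp add: cnj_sum mult.commute)

lemma herm_real: assumes A: "A \<in> carrier_mat n n" and h: "mat_adjoint A = A" and v: "v \<in> carrier_vec n"
  shows "Im (conjugate v \<bullet> (A *\<^sub>v (v :: complex Matrix.vec))) = 0"
proof -
  have Av: "A *\<^sub>v v \<in> carrier_vec n" using A v by (rule mult_mat_vec_carrier)
  have "conjugate v \<bullet> (A *\<^sub>v v) = conjugate (A *\<^sub>v v) \<bullet> v"
    using sprod_adj[OF A v v] h by simp
  also have "\<dots> = cnj (conjugate v \<bullet> (A *\<^sub>v v))"
    using sprod_cnj[OF v Av] by simp
  finally show ?thesis by (metis Reals_cnj_iff complex_is_Real_iff)
qed



lemma conj_qf: assumes P: "P \<in> carrier_mat n m" and A: "A \<in> carrier_mat m m" and v: "v \<in> carrier_vec n"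
  shows "conjugate v \<bullet> ((P * A * mat_adjoint P) *\<^sub>v v) =
     conjugate (mat_adjoint P *\<^sub>v v) \<bullet> (A *\<^sub>v (mat_adjoint P *\<^sub>v (v::complex Matrix.vec)))"
proof -
  have aP: "mat_adjoint P \<in> carrier_mat m n" using P by simp
  have w: "mat_adjoint P *\<^sub>v v \<in> carrier_vec m" using aP v by (rule mult_mat_vec_carrier)
  have PA: "P * A \<in> carrier_mat n m" using P A by (rule mult_carrier_mat)
  have "(P * A * mat_adjoint P) *\<^sub>v v = P *\<^sub>v (A *\<^sub>v (mat_adjoint P *\<^sub>v v))"
    using assoc_mult_mat_vec[OF PA aP v] assoc_mult_mat_vec[OF P A w] by simp
  then show ?thesis using sprod_adj[OF P v mult_mat_vec_carrier[OF A w]] by simp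
qed

lemma herm_conj: assumes P: "P \<in> carrier_mat n m" and A: "A \<in> carrier_mat m m" and h: "mat_adjoint A = A"
  shows "mat_adjoint (P * A * mat_adjoint P) = P * A * mat_adjoint (P :: complex mat)"
proof -
  have aP: "mat_adjoint P \<in> carrier_mat m n" using P by simp
  have PA: "P * A \<in> carrier_mat n m" using P A by (rule mult_carrier_mat)
  have "mat_adjoint (P * A * mat_adjoint P) = P * mat_adjoint (P * A)"
    using adj_mult[OF PA aP] by simp
  also have "\<dots> = P * (A * mat_adjoint P)" using adj_mult[OF P A] h by simp
  also have "\<dots> = P * A * mat_adjoint P" using assoc_mult_mat[OF P A aP] by simp
  finally show ?thesis .
qed

lemma psd_iff_Re: "psd_mat n A \<longleftrightarrow> A \<in> carrier_mat n n \<and> mat_adjoint A = A \<and>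
     (\<forall>v \<in> carrier_vec n. 0 \<le> Re (conjugate v \<bullet> (A *\<^sub>v v)))"
  unfolding psd_mat_def less_eq_complex_def using herm_real by auto

lemma psd_conj: assumes A: "psd_mat m A" and P: "P \<in> carrier_mat n m"
  shows "psd_mat n (P * A * mat_adjoint P)"
proof -
  have Ac: "A \<in> carrier_mat m m" and h: "mat_adjoint A = A"
    and q: "\<And>v. v \<in> carrier_vec m \<Longrightarrow> 0 \<le> Re (conjugate v \<bullet> (A *\<^sub>v v))"
    using A unfolding psd_iff_Re by auto
  have aP: "mat_adjoint P \<in> carrier_mat m n" using P by simp
  have c: "P * A * mat_adjoint P \<in> carrier_mat n n"
    using mult_carrier_mat[OF mult_carrier_mat[OF P Ac] aP] .
  show ?thesis unfolding psd_iff_Re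
  proof (intro conjI ballI)
    show "P * A * mat_adjoint P \<in> carrier_mat n n" by (rule c)
    show "mat_adjoint (P * A * mat_adjoint P) = P * A * mat_adjoint P" by (rule herm_conj[OF P Ac h])
    fix v :: "complex Matrix.vec" assume v: "v \<in> carrier_vec n"
    show "0 \<le> Re (conjugate v \<bullet> (P * A * mat_adjoint P *\<^sub>v v))"
      unfolding conj_qf[OF P Ac v] by (rule q[OF mult_mat_vec_carrier[OF aP v]])
  qed
qed

lemma pd_conj: assumes A: "pd_mat m A" and P: "P \<in> carrier_mat m m" and u: "P * mat_adjoint P = 1\<^sub>m m"
  shows "pd_mat m (P * A * mat_adjoint P)"
proof -
  have Ac: "A \<in> carrier_mat m m" and h: "mat_adjoint A = A"
    and q: "\<And>v. v \<in> carrier_vec m \<Longrightarrow> v \<noteq> 0\<^sub>v m \<Longrightarrow> 0 < conjugate v \<bullet> (A *\<^sub>v v)"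
    using A unfolding pd_mat_def by auto
  have aP: "mat_adjoint P \<in> carrier_mat m m" using P by simp
  have c: "P * A * mat_adjoint P \<in> carrier_mat m m"
    using mult_carrier_mat[OF mult_carrier_mat[OF P Ac] aP] .
  show ?thesis unfolding pd_mat_def
  proof (intro conjI ballI impI)
    show "P * A * mat_adjoint P \<in> carrier_mat m m" by (rule c)
    show "mat_adjoint (P * A * mat_adjoint P) = P * A * mat_adjoint P" by (rule herm_conj[OF P Ac h])
    fix v :: "complex Matrix.vec" assume v: "v \<in> carrier_vec m" and v0: "v \<noteq> 0\<^sub>v m"
    have w: "mat_adjoint P *\<^sub>v v \<in> carrier_vec m" using aP v by (rule mult_mat_vec_carrier)
    have "mat_adjoint P *\<^sub>v v \<noteq> 0\<^sub>v m"
    proof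
      assume "mat_adjoint P *\<^sub>v v = 0\<^sub>v m"
      then have "P *\<^sub>v (mat_adjoint P *\<^sub>v v) = 0\<^sub>v m" using P
        by (intro eq_vecI) (simp_all add: carrier_matD)
      moreover have "P *\<^sub>v (mat_adjoint P *\<^sub>v v) = v"
        using assoc_mult_mat_vec[OF P aP v] u v by simp
      ultimately show False using v0 by simp
    qed
    then show "0 < conjugate v \<bullet> (P * A * mat_adjoint P *\<^sub>v v)"
      unfolding conj_qf[OF P Ac v] using q[OF w] by simp
  qed
qed

lemma mtrace_sum: "A \<in> carrier_mat n n \<Longrightarrow> mtrace A = (\<Sum>i<n. A $$ (i,i))"
  unfolding mtrace_def by simp

lemma mtrace_comm: assumes A: "A \<in> carrier_mat n m" and B: "B \<in> carrier_mat m n"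
  shows "mtrace (A * B) = mtrace (B * A)"
proof -
  have "mtrace (A * B) = (\<Sum>i<n. \<Sum>j<m. A $$ (i,j) * B $$ (j,i))"
    using A B unfolding mtrace_def by (simp add: scalar_prod_def atLeast0LessThan)
  also have "\<dots> = (\<Sum>j<m. \<Sum>i<n. B $$ (j,i) * A $$ (i,j))"
    by (subst sum.swap) (simp add: mult.commute)
  also have "\<dots> = mtrace (B * A)"
    using A B unfolding mtrace_def by (simp add: scalar_prod_def atLeast0LessThan)
  finally show ?thesis .
qed

lemma mtrace_conj: assumes A: "A \<in> carrier_mat m m" and P: "P \<in> carrier_mat n m"
  and u: "mat_adjoint P * P = 1\<^sub>m m"
  shows "mtrace (P * A * mat_adjoint P) = mtrace A"
proof -
  have aP: "mat_adjoint P \<in> carrier_mat m n" using P by simp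
  have AaP: "A * mat_adjoint P \<in> carrier_mat m n" using A aP by (rule mult_carrier_mat)
  have "mtrace (P * A * mat_adjoint P) = mtrace (P * (A * mat_adjoint P))"
    using assoc_mult_mat[OF P A aP] by simp
  also have "\<dots> = mtrace (A * mat_adjoint P * P)" by (rule mtrace_comm[OF P AaP])
  also have "\<dots> = mtrace (A * (mat_adjoint P * P))" using assoc_mult_mat[OF A aP P] by simp
  also have "\<dots> = mtrace A" using u A by simp
  finally show ?thesis .
qed




definition bq :: "nat \<Rightarrow> complex mat \<Rightarrow> (nat \<Rightarrow> complex) \<Rightarrow> (nat \<Rightarrow> complex) \<Rightarrow> complex" where
  "bq n C u w = (\<Sum>i<n. cnj (u i) * (\<Sum>j<n. C $$ (i,j) * w j))"

lemma bq_expand: "bq n C (\<lambda>i. x i + of_real t * y i) (\<lambda>i. x i + of_real t * y i) =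
   bq n C x x + of_real t * (bq n C x y + bq n C y x) + of_real (t^2) * bq n C y y"
proof -
  define X where "X i = (\<Sum>j<n. C $$ (i,j) * x j)" for i
  define Y where "Y i = (\<Sum>j<n. C $$ (i,j) * y j)" for i
  have inner: "(\<Sum>j<n. C $$ (i,j) * (x j + of_real t * y j)) = X i + of_real t * Y i" for i
    unfolding X_def Y_def by (simp add: distrib_left sum.distrib sum_distrib_left mult.left_commute)
  have pt: "cnj (x i + of_real t * y i) * (X i + of_real t * Y i) =
      cnj (x i) * X i + of_real t * (cnj (x i) * Y i + cnj (y i) * X i) + of_real (t^2) * (cnj (y i) * Y i)" for i
    by (simp add: ring_distribs power2_eq_square mult_ac)
  have "bq n C (\<lambda>i. x i + of_real t * y i) (\<lambda>i. x i + of_real t * y i) =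
     (\<Sum>i<n. cnj (x i) * X i + of_real t * (cnj (x i) * Y i + cnj (y i) * X i) + of_real (t^2) * (cnj (y i) * Y i))"
    unfolding bq_def inner pt by simp
  also have "\<dots> = bq n C x x + of_real t * (bq n C x y + bq n C y x) + of_real (t^2) * bq n C y y"
    unfolding bq_def X_def[symmetric] Y_def[symmetric] by (simp add: sum.distrib sum_distrib_left distrib_left)
  finally show ?thesis .
qed

lemma bq_herm: assumes C: "C \<in> carrier_mat n n" and h: "mat_adjoint C = C"
  shows "bq n C x y = cnj (bq n C y x)"
proof -
  have e: "\<And>i j. i < n \<Longrightarrow> j < n \<Longrightarrow> C $$ (j,i) = cnj (C $$ (i,j))"
  proof -
    fix i j assume "i < n" "j < n"
    then have "mat_adjoint C $$ (j,i) = cnj (C $$ (i,j))" using C by simp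
    then show "C $$ (j,i) = cnj (C $$ (i,j))" using h by simp
  qed
  have "bq n C x y = (\<Sum>i<n. \<Sum>j<n. cnj (x i) * C $$ (i,j) * y j)"
    unfolding bq_def by (simp add: sum_distrib_left mult.assoc)
  also have "\<dots> = (\<Sum>j<n. \<Sum>i<n. cnj (x i) * C $$ (i,j) * y j)" by (rule sum.swap)
  also have "\<dots> = (\<Sum>j<n. \<Sum>i<n. y j * cnj (C $$ (j,i)) * cnj (x i))"
  proof (intro sum.cong refl)
    fix j i assume "j \<in> {..<n}" "i \<in> {..<n}"
    then have "cnj (C $$ (j,i)) = C $$ (i,j)" using e[of i j] by simp
    then show "cnj (x i) * C $$ (i,j) * y j = y j * cnj (C $$ (j,i)) * cnj (x i)" by simp
  qed
  also have "\<dots> = cnj (bq n C y x)"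
    unfolding bq_def by (simp add: cnj_sum sum_distrib_left mult.assoc)
  finally show ?thesis .
qed

lemma qf_bq: assumes "C \<in> carrier_mat n n" "v \<in> carrier_vec n"
  shows "conjugate v \<bullet> (C *\<^sub>v v) = bq n C (($) v) (($) v)"
  unfolding qf_sum[OF assms(1,2,2)] bq_def by simp

lemma zero_lemma:
  assumes C: "C \<in> carrier_mat n n" and h: "mat_adjoint C = C"
    and pos: "\<And>v. v \<in> carrier_vec n \<Longrightarrow> 0 \<le> Re (conjugate v \<bullet> (C *\<^sub>v v))"
    and x0: "x0 \<in> carrier_vec n" and z: "Re (conjugate x0 \<bullet> (C *\<^sub>v x0)) = 0"
  shows "C *\<^sub>v x0 = 0\<^sub>v n"
proof -
  define x where "x = (\<lambda>i. x0 $ i)"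
  define y where "y = (\<lambda>i. \<Sum>j<n. C $$ (i,j) * x j)"
  define s where "s = (\<Sum>i<n. (cmod (y i))^2)"
  have posb: "0 \<le> Re (bq n C u u)" for u
  proof -
    have "0 \<le> Re (conjugate (Matrix.vec n u) \<bullet> (C *\<^sub>v Matrix.vec n u))" by (rule pos) simp
    also have "conjugate (Matrix.vec n u) \<bullet> (C *\<^sub>v Matrix.vec n u) = bq n C u u"
      unfolding qf_bq[OF C Matrix.vec_carrier] bq_def by simp
    finally show ?thesis .
  qed
  have bxx: "Re (bq n C x x) = 0" using z unfolding qf_bq[OF C x0] x_def by simp
  have byx0: "bq n C y x = (\<Sum>i<n. cnj (y i) * y i)"
    unfolding bq_def y_def by simp
  have byx: "bq n C y x = of_real s"
    unfolding byx0 s_def of_real_sum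
    by (intro sum.cong refl) (metis complex_norm_square mult.commute)
  have bxy: "bq n C x y = of_real s" using bq_herm[OF C h, of x y] byx by simp
  have s0: "s \<ge> 0" unfolding s_def by (simp add: sum_nonneg)
  define a where "a = Re (bq n C y y)"
  have a0: "a \<ge> 0" unfolding a_def by (rule posb)
  have key: "0 \<le> 2 * t * s + t^2 * a" for t :: real
  proof -
    have "0 \<le> Re (bq n C (\<lambda>i. x i + of_real t * y i) (\<lambda>i. x i + of_real t * y i))" by (rule posb)
    also have "\<dots> = 2 * t * s + t^2 * a"
      unfolding bq_expand a_def using bxx byx bxy by simp
    finally show ?thesis .
  qed
  have s_zero: "s = 0"
  proof (rule ccontr)
    assume "s \<noteq> 0"
    then have sp: "s > 0" using s0 by simp
    define u where "u = s / (a + 1)"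
    define t where "t = - u"
    have up: "u > 0" unfolding u_def using sp a0 by simp
    have ua: "u * a \<le> s"
    proof -
      have "u * a = s * (a / (a + 1))" unfolding u_def by simp
      also have "\<dots> \<le> s * 1" using sp a0 by (intro mult_left_mono) auto
      finally show ?thesis by simp
    qed
    have "2 * t * s + t^2 * a = u * (u * a - 2 * s)"
      unfolding t_def by (simp add: power2_eq_square algebra_simps)
    also have "\<dots> < 0" using up ua sp by (intro mult_pos_neg) auto
    finally show False using key[of t] by simp
  qed
  have "\<forall>i\<in>{..<n}. (cmod (y i))^2 = 0"
    using s_zero unfolding s_def by (subst sum_nonneg_eq_0_iff[symmetric]) auto
  then have yz: "\<And>i. i < n \<Longrightarrow> y i = 0" by simp
  show ?thesis
  proof (rule eq_vecI)
    fix i assume "i < dim_vec (0\<^sub>v n :: complex Matrix.vec)"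
    then have i: "i < n" by simp
    have "(C *\<^sub>v x0) $ i = y i"
      using i C x0 unfolding y_def x_def by (simp add: scalar_prod_def atLeast0LessThan)
    then show "(C *\<^sub>v x0) $ i = 0\<^sub>v n $ i" using yz[OF i] i by simp
  qed (use C in simp)
qed




lemma cont_coord[continuous_intros]: "continuous_on S (\<lambda>f::nat \<Rightarrow> 'b::topological_space. f i)"
  by (rule continuous_on_subset[OF continuous_on_product_coordinates]) simp

lemma compact_K: "compact (PiE UNIV (\<lambda>i::nat. if i < n then cball (0::complex) 1 else {0}))"
proof -
  have "compactin (product_topology (\<lambda>i. euclidean) UNIV)
          (PiE UNIV (\<lambda>i::nat. if i < n then cball (0::complex) 1 else {0}))"
    by (subst compactin_PiE) (auto simp: compactin_euclidean_iff compact_cball)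
  then show ?thesis unfolding euclidean_product_topology compactin_euclidean_iff .
qed

lemma bq_cong: assumes "\<And>i. i < n \<Longrightarrow> u i = u' i" "\<And>i. i < n \<Longrightarrow> w i = w' i"
  shows "bq n C u w = bq n C u' w'"
  unfolding bq_def using assms by (intro sum.cong refl) simp_all

lemma bq_scale: "bq n C (\<lambda>i. of_real c * u i) (\<lambda>i. of_real c * u i) = of_real (c^2) * bq n C u u"
proof -
  have "\<And>i. (\<Sum>j<n. C $$ (i,j) * (of_real c * u j)) = of_real c * (\<Sum>j<n. C $$ (i,j) * u j)"
    by (simp add: sum_distrib_left mult.left_commute)
  then have "bq n C (\<lambda>i. of_real c * u i) (\<lambda>i. of_real c * u i) =
     (\<Sum>i<n. of_real (c^2) * (cnj (u i) * (\<Sum>j<n. C $$ (i,j) * u j)))"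
    unfolding bq_def by (intro sum.cong refl) (simp add: power2_eq_square)
  also have "\<dots> = of_real (c^2) * bq n C u u" unfolding bq_def by (simp add: sum_distrib_left)
  finally show ?thesis .
qed

lemma shift_row: fixes A :: "complex mat" assumes A: "A \<in> carrier_mat n n" and v: "v \<in> carrier_vec n" and i: "i < n"
  shows "((A - c \<cdot>\<^sub>m 1\<^sub>m n) *\<^sub>v v) $ i = (A *\<^sub>v v) $ i - c * v $ i"
proof -
  have "((A - c \<cdot>\<^sub>m 1\<^sub>m n) *\<^sub>v v) $ i = (\<Sum>j<n. (A $$ (i,j) - c * (if i = j then 1 else 0)) * v $ j)"
    using A v i by (simp add: scalar_prod_def atLeast0LessThan)
  also have "\<dots> = (\<Sum>j<n. A $$ (i,j) * v $ j) - (\<Sum>j<n. (if i = j then c * v $ j else 0))"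
  proof -
    have "(A $$ (i,j) - c * (if i = j then 1 else 0)) * v $ j = A $$ (i,j) * v $ j - (if i = j then c * v $ j else 0)" for j
      by (cases "i = j") (simp_all add: left_diff_distrib)
    then show ?thesis by (simp only: sum_subtractf)
  qed
  also have "\<dots> = (A *\<^sub>v v) $ i - c * v $ i"
    using A v i by (simp add: scalar_prod_def atLeast0LessThan)
  finally show ?thesis .
qed






definition nsq :: "nat \<Rightarrow> (nat \<Rightarrow> complex) \<Rightarrow> real" where
  "nsq n f = (\<Sum>i<n. (cmod (f i))^2)"

lemma sprod_self_nsq: assumes "v \<in> carrier_vec n"
  shows "conjugate v \<bullet> v = of_real (nsq n (($) v))"
  unfolding sprod_sum[OF assms assms] nsq_def of_real_sum
  by (intro sum.cong refl) (metis complex_norm_square mult.commute)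

lemma shift_qf: fixes A :: "complex mat" assumes A: "A \<in> carrier_mat n n" and v: "v \<in> carrier_vec n"
  shows "conjugate v \<bullet> ((A - c \<cdot>\<^sub>m 1\<^sub>m n) *\<^sub>v v) = conjugate v \<bullet> (A *\<^sub>v v) - c * of_real (nsq n (($) v))"
proof -
  have c1: "(A - c \<cdot>\<^sub>m 1\<^sub>m n) *\<^sub>v v \<in> carrier_vec n"
    by (rule mult_mat_vec_carrier[OF minus_carrier_mat[OF smult_carrier_mat[OF one_carrier_mat]] v])
  have c2: "A *\<^sub>v v \<in> carrier_vec n" by (rule mult_mat_vec_carrier[OF A v])
  have "conjugate v \<bullet> ((A - c \<cdot>\<^sub>m 1\<^sub>m n) *\<^sub>v v) = (\<Sum>i<n. cnj (v $ i) * ((A *\<^sub>v v) $ i - c * v $ i))"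
    unfolding sprod_sum[OF v c1] using shift_row[OF A v] by (intro sum.cong refl) simp
  also have "\<dots> = (\<Sum>i<n. cnj (v $ i) * (A *\<^sub>v v) $ i) - c * (\<Sum>i<n. cnj (v $ i) * v $ i)"
    by (simp add: right_diff_distrib sum_subtractf sum_distrib_left mult.left_commute)
  also have "\<dots> = conjugate v \<bullet> (A *\<^sub>v v) - c * of_real (nsq n (($) v))"
    unfolding sprod_sum[OF v c2] sprod_self_nsq[OF v, symmetric] sprod_sum[OF v v] ..
  finally show ?thesis .
qed

lemma herm_shift: fixes A :: "complex mat" assumes A: "A \<in> carrier_mat n n" and h: "mat_adjoint A = A"
  shows "mat_adjoint (A - of_real c \<cdot>\<^sub>m 1\<^sub>m n) = A - of_real c \<cdot>\<^sub>m 1\<^sub>m n"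
proof (rule eq_matI)
  fix i j assume i: "i < dim_row (A - of_real c \<cdot>\<^sub>m 1\<^sub>m n)" and j: "j < dim_col (A - of_real c \<cdot>\<^sub>m 1\<^sub>m n)"
  then have i': "i < n" and j': "j < n" by auto
  have "cnj (A $$ (j,i)) = A $$ (i,j)"
  proof -
    have "mat_adjoint A $$ (i,j) = cnj (A $$ (j,i))" using A i' j' by simp
    then show ?thesis using h by simp
  qed
  then show "mat_adjoint (A - of_real c \<cdot>\<^sub>m 1\<^sub>m n) $$ (i, j) = (A - of_real c \<cdot>\<^sub>m 1\<^sub>m n) $$ (i, j)"
    using A i' j' by simp
qed (use A in simp_all)

lemma nsq_zero: assumes "nsq n f = 0" "i < n" shows "f i = 0"
proof -
  have "\<forall>i\<in>{..<n}. (cmod (f i))^2 = 0"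
    using assms(1) unfolding nsq_def by (subst sum_nonneg_eq_0_iff[symmetric]) auto
  then show ?thesis using assms(2) by simp
qed

lemma nsq_nonneg: "0 \<le> nsq n f" unfolding nsq_def by (simp add: sum_nonneg)

lemma rayleigh_min:
  fixes A :: "complex mat"
  assumes A: "A \<in> carrier_mat n n" and h: "mat_adjoint A = A" and n: "n > 0"
  shows "\<exists>\<mu>::real. \<exists>x0. eigenvector A x0 (of_real \<mu>) \<and>
     (\<forall>v \<in> carrier_vec n. \<mu> * nsq n (($) v) \<le> Re (conjugate v \<bullet> (A *\<^sub>v v)))"
proof -
  define K where "K = PiE UNIV (\<lambda>i::nat. if i < n then cball (0::complex) 1 else {0})"
  define S where "S = K \<inter> {f. nsq n f = 1}"
  define g where "g f = Re (bq n A f f)" for f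
  have cS: "compact S" unfolding S_def K_def
    by (intro compact_Int_closed compact_K closed_Collect_eq continuous_on_const; unfold nsq_def; intro continuous_intros)
  have neS: "S \<noteq> {}"
  proof -
    define e where "e = (\<lambda>i::nat. if i = 0 then (1::complex) else 0)"
    have "e \<in> K" unfolding K_def e_def using n by auto
    moreover have "nsq n e = 1"
    proof -
      have "nsq n e = (\<Sum>i<n. if i = 0 then 1 else 0)" unfolding nsq_def e_def by (intro sum.cong refl) simp
      then show ?thesis using n by simp
    qed
    ultimately show ?thesis unfolding S_def by blast
  qed
  have cg: "continuous_on S g" unfolding g_def bq_def by (intro continuous_intros)
  obtain f0 where f0S: "f0 \<in> S" and f0min': "\<forall>f\<in>S. g f0 \<le> g f"
    using continuous_attains_inf[OF cS neS cg] by (elim bexE)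
  have f0min: "g f0 \<le> g f" if "f \<in> S" for f using f0min' that by simp
  define \<mu> where "\<mu> = g f0"
  have bound: "\<mu> * nsq n (($) v) \<le> Re (conjugate v \<bullet> (A *\<^sub>v v))" if v: "v \<in> carrier_vec n" for v
  proof (cases "nsq n (($) v) = 0")
    case True
    then have "\<And>i. i < n \<Longrightarrow> v $ i = 0" using nsq_zero by blast
    then have "conjugate v \<bullet> (A *\<^sub>v v) = 0" unfolding qf_sum[OF A v v] by simp
    then show ?thesis using True by simp
  next
    case False
    define N where "N = nsq n (($) v)"
    have Np: "N > 0" using False nsq_nonneg[of n "($) v"] unfolding N_def by simp
    define r where "r = sqrt N"
    have rp: "r > 0" unfolding r_def using Np by simp
    have r2: "r^2 = N" unfolding r_def using Np by simp
    define f where "f i = (if i < n then of_real (1 / r) * v $ i else 0)" for i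
    have fK: "f \<in> K" unfolding K_def
    proof (intro PiE_I)
      fix i :: nat
      show "f i \<in> (if i < n then cball 0 1 else {0})"
      proof (cases "i < n")
        case True
        have "(cmod (v $ i))^2 \<le> N" unfolding N_def nsq_def
          by (rule member_le_sum) (use True in auto)
        then have "cmod (v $ i) \<le> r" unfolding r_def by (simp add: real_le_rsqrt)
        then have "cmod (v $ i) / r \<le> 1" using rp by simp
        then show ?thesis using True rp unfolding f_def by (simp add: norm_divide)
      qed (simp add: f_def)
    qed simp
    have "nsq n f = (\<Sum>i<n. (1 / r)^2 * (cmod (v $ i))^2)"
      unfolding nsq_def f_def by (intro sum.cong refl) (use rp in \<open>simp add: norm_divide power_divide\<close>)
    also have "\<dots> = N / r^2" unfolding N_def nsq_def by (simp add: sum_divide_distrib power_divide)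
    also have "\<dots> = 1" using r2 Np by simp
    finally have fS: "f \<in> S" unfolding S_def using fK by simp
    have "bq n A f f = bq n A (\<lambda>i. of_real (1 / r) * v $ i) (\<lambda>i. of_real (1 / r) * v $ i)"
      by (rule bq_cong) (simp_all add: f_def)
    also have "\<dots> = of_real ((1/r)^2) * bq n A (($) v) (($) v)" by (rule bq_scale)
    finally have "g f = (1 / r)^2 * Re (conjugate v \<bullet> (A *\<^sub>v v))"
      unfolding g_def qf_bq[OF A v] by simp
    then have "\<mu> \<le> Re (conjugate v \<bullet> (A *\<^sub>v v)) / N"
      using f0min[OF fS] r2 unfolding \<mu>_def by (simp add: power_divide)
    then show ?thesis using Np unfolding N_def by (simp add: pos_le_divide_eq mult.commute)
  qed
  define x0 where "x0 = Matrix.vec n f0"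
  have x0c: "x0 \<in> carrier_vec n" unfolding x0_def by simp
  have nx0: "nsq n (($) x0) = 1"
  proof -
    have "nsq n (($) x0) = nsq n f0" unfolding nsq_def x0_def by (intro sum.cong refl) simp
    then show ?thesis using f0S unfolding S_def by simp
  qed
  have qx0: "Re (conjugate x0 \<bullet> (A *\<^sub>v x0)) = \<mu>"
  proof -
    have "bq n A (($) x0) (($) x0) = bq n A f0 f0" by (rule bq_cong) (simp_all add: x0_def)
    then show ?thesis unfolding qf_bq[OF A x0c] \<mu>_def g_def by simp
  qed
  define C where "C = A - of_real \<mu> \<cdot>\<^sub>m 1\<^sub>m n"
  have Cc: "C \<in> carrier_mat n n" unfolding C_def by (rule minus_carrier_mat[OF smult_carrier_mat[OF one_carrier_mat]])
  have Ch: "mat_adjoint C = C" unfolding C_def by (rule herm_shift[OF A h])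
  have Cq: "Re (conjugate v \<bullet> (C *\<^sub>v v)) = Re (conjugate v \<bullet> (A *\<^sub>v v)) - \<mu> * nsq n (($) v)"
    if "v \<in> carrier_vec n" for v
    unfolding C_def shift_qf[OF A that] by simp
  have "C *\<^sub>v x0 = 0\<^sub>v n"
  proof (rule zero_lemma[OF Cc Ch _ x0c])
    fix v :: "complex Matrix.vec" assume "v \<in> carrier_vec n"
    then show "0 \<le> Re (conjugate v \<bullet> (C *\<^sub>v v))" using Cq bound by simp
  next
    show "Re (conjugate x0 \<bullet> (C *\<^sub>v x0)) = 0" using Cq[OF x0c] qx0 nx0 by simp
  qed
  have ev: "A *\<^sub>v x0 = of_real \<mu> \<cdot>\<^sub>v x0"
  proof (rule eq_vecI)
    fix i assume "i < dim_vec (of_real \<mu> \<cdot>\<^sub>v x0)"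
    then have i: "i < n" using x0c by simp
    have "(C *\<^sub>v x0) $ i = (A *\<^sub>v x0) $ i - of_real \<mu> * x0 $ i"
      unfolding C_def by (rule shift_row[OF A x0c i])
    then show "(A *\<^sub>v x0) $ i = (of_real \<mu> \<cdot>\<^sub>v x0) $ i"
      using \<open>C *\<^sub>v x0 = 0\<^sub>v n\<close> i x0c by simp
  qed (use A x0c in simp)
  have "x0 \<noteq> 0\<^sub>v n"
  proof
    assume "x0 = 0\<^sub>v n"
    then have "nsq n (($) x0) = 0" unfolding nsq_def by simp
    then show False using nx0 by simp
  qed
  then have "eigenvector A x0 (of_real \<mu>)" unfolding eigenvector_def using ev x0c A by simp
  then show ?thesis using bound by blast
qed





lemma sprod_bq: assumes "C \<in> carrier_mat n n" "u \<in> carrier_vec n" "w \<in> carrier_vec n"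
  shows "conjugate u \<bullet> (C *\<^sub>v w) = bq n C (($) u) (($) w)"
  unfolding qf_sum[OF assms] bq_def by simp

lemma smult_qf: fixes X :: "complex mat"
  assumes X: "X \<in> carrier_mat n n" and u: "u \<in> carrier_vec n" and w: "w \<in> carrier_vec n"
  shows "conjugate u \<bullet> ((k \<cdot>\<^sub>m X) *\<^sub>v w) = k * (conjugate u \<bullet> (X *\<^sub>v w))"
proof -
  have kX: "k \<cdot>\<^sub>m X \<in> carrier_mat n n" using X by simp
  show ?thesis unfolding qf_sum[OF kX u w] qf_sum[OF X u w] using X
    by (simp add: sum_distrib_left mult_ac)
qed

lemma conj_append: "conjugate (x @\<^sub>v y) = conjugate x @\<^sub>v conjugate (y :: complex Matrix.vec)"
  unfolding append_vec_def Let_def by (rule eq_vecI) simp_all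

lemma eig_qf: assumes A: "A \<in> carrier_mat n n" and e: "eigenvector A w c"
  shows "conjugate w \<bullet> (A *\<^sub>v w) = c * of_real (nsq n (($) w))" "nsq n (($) w) > 0"
proof -
  have w: "w \<in> carrier_vec n" and w0: "w \<noteq> 0\<^sub>v n" and Aw: "A *\<^sub>v w = c \<cdot>\<^sub>v w"
    using e A unfolding eigenvector_def by auto
  show "conjugate w \<bullet> (A *\<^sub>v w) = c * of_real (nsq n (($) w))"
    unfolding Aw sprod_self_nsq[OF w, symmetric] using w by (simp add: scalar_prod_smult_right)
  show "nsq n (($) w) > 0"
  proof (rule ccontr)
    assume "\<not> nsq n (($) w) > 0"
    then have "nsq n (($) w) = 0" using nsq_nonneg[of n "($) w"] by simp
    then have "\<And>i. i < n \<Longrightarrow> w $ i = 0" using nsq_zero by blast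
    then have "w = 0\<^sub>v n" using w by (intro eq_vecI) auto
    then show False using w0 by simp
  qed
qed

lemma finite_real_eigs: assumes A: "(A :: complex mat) \<in> carrier_mat n n"
  shows "finite {x::real. x \<noteq> 0 \<and> eigenvalue A (complex_of_real x)}"
proof -
  have "{x::real. x \<noteq> 0 \<and> eigenvalue A (complex_of_real x)} \<subseteq> complex_of_real -` spectrum A"
    unfolding spectrum_def by auto
  moreover have "finite (complex_of_real -` spectrum A)"
    by (rule finite_vimageI[OF card_finite_spectrum(1)[OF A]]) (simp add: inj_on_def)
  ultimately show ?thesis by (rule finite_subset)
qed

lemma lambda_min_bound:
  assumes pd: "pd_mat n A" and n: "n > 0"
  shows "lambda_min A > 0" "\<And>v. v \<in> carrier_vec n \<Longrightarrow> lambda_min A * nsq n (($) v) \<le> Re (conjugate v \<bullet> (A *\<^sub>v v))"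
proof -
  have A: "A \<in> carrier_mat n n" and h: "mat_adjoint A = A"
    and q: "\<And>v. v \<in> carrier_vec n \<Longrightarrow> v \<noteq> 0\<^sub>v n \<Longrightarrow> 0 < conjugate v \<bullet> (A *\<^sub>v v)"
    using pd unfolding pd_mat_def by auto
  obtain \<mu> x0 where ev: "eigenvector A x0 (of_real \<mu>)"
    and bd: "\<And>v. v \<in> carrier_vec n \<Longrightarrow> \<mu> * nsq n (($) v) \<le> Re (conjugate v \<bullet> (A *\<^sub>v v))"
    using rayleigh_min[OF A h n] by blast
  have x0: "x0 \<in> carrier_vec n" "x0 \<noteq> 0\<^sub>v n" using ev A unfolding eigenvector_def by auto
  have "0 < conjugate x0 \<bullet> (A *\<^sub>v x0)" by (rule q[OF x0])
  then have "0 < \<mu> * nsq n (($) x0)" unfolding eig_qf(1)[OF A ev] by (simp add: less_complex_def)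
  then have mup: "\<mu> > 0" using eig_qf(2)[OF A ev] by (simp add: zero_less_mult_iff)
  define T where "T = {x::real. x \<noteq> 0 \<and> eigenvalue A (complex_of_real x)}"
  have fT: "finite T" unfolding T_def by (rule finite_real_eigs[OF A])
  have muT: "\<mu> \<in> T" unfolding T_def eigenvalue_def using ev mup by auto
  have le: "\<mu> \<le> s" if sT: "s \<in> T" for s
  proof -
    obtain w where ew: "eigenvector A w (of_real s)" using sT unfolding T_def eigenvalue_def by auto
    have wc: "w \<in> carrier_vec n" using ew A unfolding eigenvector_def by auto
    have "\<mu> * nsq n (($) w) \<le> s * nsq n (($) w)"
      using bd[OF wc] unfolding eig_qf(1)[OF A ew] by simp
    then show ?thesis using eig_qf(2)[OF A ew] by simp
  qed
  have "lambda_min A = \<mu>" unfolding lambda_min_def T_def[symmetric]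
    by (rule Min_eqI[OF fT le muT])
  then show "lambda_min A > 0" "\<And>v. v \<in> carrier_vec n \<Longrightarrow> lambda_min A * nsq n (($) v) \<le> Re (conjugate v \<bullet> (A *\<^sub>v v))"
    using mup bd by auto
qed





lemma smult_mat_vec: fixes X :: "complex mat" assumes X: "X \<in> carrier_mat n m" and w: "w \<in> carrier_vec m"
  shows "(k \<cdot>\<^sub>m X) *\<^sub>v w = k \<cdot>\<^sub>v (X *\<^sub>v w)"
proof (rule eq_vecI)
  fix i assume "i < dim_vec (k \<cdot>\<^sub>v (X *\<^sub>v w))"
  then have i: "i < n" using X by simp
  show "((k \<cdot>\<^sub>m X) *\<^sub>v w) $ i = (k \<cdot>\<^sub>v (X *\<^sub>v w)) $ i"
    using X w i by (simp add: scalar_prod_def sum_distrib_left mult.assoc)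
qed (use X in simp)

lemma lambda_max_bound:
  assumes psd: "psd_mat n B" and n: "n > 0"
  shows "(\<forall>v\<in>carrier_vec n. Re (conjugate v \<bullet> (B *\<^sub>v v)) \<le> lambda_max B * nsq n (($) v)) \<or>
         (\<forall>v\<in>carrier_vec n. Re (conjugate v \<bullet> (B *\<^sub>v v)) = 0)"
proof -
  have B: "B \<in> carrier_mat n n" and h: "mat_adjoint B = B"
    and q: "\<And>v. v \<in> carrier_vec n \<Longrightarrow> 0 \<le> Re (conjugate v \<bullet> (B *\<^sub>v v))"
    using psd unfolding psd_iff_Re by auto
  define B' where "B' = (-1) \<cdot>\<^sub>m B"
  have B'c: "B' \<in> carrier_mat n n" unfolding B'_def using B by simp
  have h': "mat_adjoint B' = B'" unfolding B'_def adj_smult h by simp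
  have q': "conjugate v \<bullet> (B' *\<^sub>v v) = - (conjugate v \<bullet> (B *\<^sub>v v))" if "v \<in> carrier_vec n" for v
    unfolding B'_def smult_qf[OF B that that] by simp
  obtain \<nu> x0 where ev: "eigenvector B' x0 (of_real \<nu>)"
    and bd: "\<And>v. v \<in> carrier_vec n \<Longrightarrow> \<nu> * nsq n (($) v) \<le> Re (conjugate v \<bullet> (B' *\<^sub>v v))"
    using rayleigh_min[OF B'c h' n] by blast
  have x0: "x0 \<in> carrier_vec n" "x0 \<noteq> 0\<^sub>v n" and B'x0: "B' *\<^sub>v x0 = of_real \<nu> \<cdot>\<^sub>v x0"
    using ev B'c unfolding eigenvector_def by auto
  define M where "M = - \<nu>"
  have Bx0: "B *\<^sub>v x0 = of_real M \<cdot>\<^sub>v x0"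
  proof -
    have "B *\<^sub>v x0 = (-1) \<cdot>\<^sub>v (B' *\<^sub>v x0)"
      unfolding B'_def smult_mat_vec[OF B x0(1)] by (simp add: smult_smult_assoc)
    then show ?thesis unfolding B'x0 M_def by (simp add: smult_smult_assoc)
  qed
  have evB: "eigenvector B x0 (of_real M)" unfolding eigenvector_def using x0 Bx0 B by simp
  have ub: "Re (conjugate v \<bullet> (B *\<^sub>v v)) \<le> M * nsq n (($) v)" if v: "v \<in> carrier_vec n" for v
    using bd[OF v] q'[OF v] unfolding M_def by simp
  show ?thesis
  proof (cases "M = 0")
    case True
    then have "\<forall>v\<in>carrier_vec n. Re (conjugate v \<bullet> (B *\<^sub>v v)) = 0"
      using ub q by (metis antisym mult_zero_left)
    then show ?thesis by simp
  next
    case False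
    have "M * nsq n (($) x0) \<ge> 0" using q[OF x0(1)] unfolding eig_qf(1)[OF B evB] by simp
    then have M0: "M \<ge> 0" using eig_qf(2)[OF B evB] by (simp add: zero_le_mult_iff)
    define T where "T = {x::real. x \<noteq> 0 \<and> eigenvalue B (complex_of_real x)}"
    have fT: "finite T" unfolding T_def by (rule finite_real_eigs[OF B])
    have MT: "M \<in> T" unfolding T_def eigenvalue_def using evB False by auto
    have "M \<le> lambda_max B" unfolding lambda_max_def T_def[symmetric] by (rule Max_ge[OF fT MT])
    then have "\<forall>v\<in>carrier_vec n. Re (conjugate v \<bullet> (B *\<^sub>v v)) \<le> lambda_max B * nsq n (($) v)"
      using ub nsq_nonneg by (meson mult_right_mono order_trans)
    then show ?thesis by simp
  qed
qed

lemma block_psd: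
  fixes A B :: "complex mat" and c :: real
  assumes A: "A \<in> carrier_mat n n" and hA: "mat_adjoint A = A" and psdB: "psd_mat n B" and c0: "c \<ge> 0"
    and bd: "\<And>x. x \<in> carrier_vec n \<Longrightarrow> c * Re (conjugate x \<bullet> (B *\<^sub>v x)) \<le> Re (conjugate x \<bullet> (A *\<^sub>v x)) / 2"
  shows "psd_mat (n+n) (four_block_mat ((1/2) \<cdot>\<^sub>m A) (complex_of_real c \<cdot>\<^sub>m B)
            (complex_of_real c \<cdot>\<^sub>m mat_adjoint B) ((1/2) \<cdot>\<^sub>m A))"
proof -
  have B: "B \<in> carrier_mat n n" and hB: "mat_adjoint B = B"
    and qB: "\<And>v. v \<in> carrier_vec n \<Longrightarrow> 0 \<le> Re (conjugate v \<bullet> (B *\<^sub>v v))"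
    using psdB unfolding psd_iff_Re by auto
  define A2 where "A2 = (1/2::complex) \<cdot>\<^sub>m A"
  define Bc where "Bc = complex_of_real c \<cdot>\<^sub>m B"
  have A2c: "A2 \<in> carrier_mat n n" unfolding A2_def using A by simp
  have Bcc: "Bc \<in> carrier_mat n n" unfolding Bc_def using B by simp
  have e: "four_block_mat ((1/2) \<cdot>\<^sub>m A) (complex_of_real c \<cdot>\<^sub>m B)
            (complex_of_real c \<cdot>\<^sub>m mat_adjoint B) ((1/2) \<cdot>\<^sub>m A) = four_block_mat A2 Bc Bc A2"
    unfolding A2_def Bc_def hB ..
  have hA2: "mat_adjoint A2 = A2" unfolding A2_def adj_smult hA by simp
  have hBc: "mat_adjoint Bc = Bc" unfolding Bc_def adj_smult hB by simp
  show ?thesis unfolding e psd_iff_Re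
  proof (intro conjI ballI)
    show "four_block_mat A2 Bc Bc A2 \<in> carrier_mat (n + n) (n + n)"
      using four_block_carrier_mat[OF A2c A2c] .
    show "mat_adjoint (four_block_mat A2 Bc Bc A2) = four_block_mat A2 Bc Bc A2"
      unfolding adj_four_block[OF A2c Bcc Bcc A2c] hA2 hBc ..
    fix v :: "complex Matrix.vec" assume v: "v \<in> carrier_vec (n + n)"
    define x where "x = vec_first v n"
    define y where "y = vec_last v n"
    have x: "x \<in> carrier_vec n" unfolding x_def by simp
    have y: "y \<in> carrier_vec n" unfolding y_def by simp
    have vxy: "v = x @\<^sub>v y" unfolding x_def y_def using vec_first_last_append[OF v] by simp
    have cx: "conjugate x \<in> carrier_vec n" using x by simp
    have cy: "conjugate y \<in> carrier_vec n" using y by simp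
    have Mv: "four_block_mat A2 Bc Bc A2 *\<^sub>v v = (A2 *\<^sub>v x + Bc *\<^sub>v y) @\<^sub>v (Bc *\<^sub>v x + A2 *\<^sub>v y)"
      unfolding vxy by (rule four_block_mat_mult_vec[OF A2c Bcc Bcc A2c x y])
    have c1: "A2 *\<^sub>v x \<in> carrier_vec n" "Bc *\<^sub>v y \<in> carrier_vec n" "Bc *\<^sub>v x \<in> carrier_vec n" "A2 *\<^sub>v y \<in> carrier_vec n"
      using A2c Bcc x y by (auto intro: mult_mat_vec_carrier)
    have "conjugate v \<bullet> (four_block_mat A2 Bc Bc A2 *\<^sub>v v) =
        conjugate x \<bullet> (A2 *\<^sub>v x + Bc *\<^sub>v y) + conjugate y \<bullet> (Bc *\<^sub>v x + A2 *\<^sub>v y)"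
      unfolding Mv unfolding vxy conj_append
      by (rule scalar_prod_append[OF cx cy]) (use c1 in auto)
    also have "\<dots> = conjugate x \<bullet> (A2 *\<^sub>v x) + conjugate x \<bullet> (Bc *\<^sub>v y) + (conjugate y \<bullet> (Bc *\<^sub>v x) + conjugate y \<bullet> (A2 *\<^sub>v y))"
      using scalar_prod_add_distrib[OF cx c1(1) c1(2)] scalar_prod_add_distrib[OF cy c1(3) c1(4)] by simp
    also have "\<dots> = (1/2) * (conjugate x \<bullet> (A *\<^sub>v x)) + of_real c * (conjugate x \<bullet> (B *\<^sub>v y))
        + (of_real c * (conjugate y \<bullet> (B *\<^sub>v x)) + (1/2) * (conjugate y \<bullet> (A *\<^sub>v y)))"
      unfolding A2_def Bc_def smult_qf[OF A x x] smult_qf[OF A y y] smult_qf[OF B x y] smult_qf[OF B y x] ..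
    finally have qM: "conjugate v \<bullet> (four_block_mat A2 Bc Bc A2 *\<^sub>v v) = \<dots>" .
    have xy: "x + y \<in> carrier_vec n" using x y by simp
    have "conjugate (x + y) \<bullet> (B *\<^sub>v (x + y)) = bq n B (\<lambda>i. x $ i + of_real 1 * y $ i) (\<lambda>i. x $ i + of_real 1 * y $ i)"
      unfolding sprod_bq[OF B xy xy] by (rule bq_cong) (use x y in simp_all)
    also have "\<dots> = conjugate x \<bullet> (B *\<^sub>v x) + (conjugate x \<bullet> (B *\<^sub>v y) + conjugate y \<bullet> (B *\<^sub>v x)) + conjugate y \<bullet> (B *\<^sub>v y)"
      unfolding bq_expand sprod_bq[OF B x x] sprod_bq[OF B x y] sprod_bq[OF B y x] sprod_bq[OF B y y] by simp
    finally have qB2: "conjugate (x + y) \<bullet> (B *\<^sub>v (x + y)) = \<dots>" .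
    have p1: "0 \<le> c * Re (conjugate (x + y) \<bullet> (B *\<^sub>v (x + y)))" using qB[OF xy] c0 by simp
    have p2: "c * Re (conjugate x \<bullet> (B *\<^sub>v x)) \<le> Re (conjugate x \<bullet> (A *\<^sub>v x)) / 2" by (rule bd[OF x])
    have p3: "c * Re (conjugate y \<bullet> (B *\<^sub>v y)) \<le> Re (conjugate y \<bullet> (A *\<^sub>v y)) / 2" by (rule bd[OF y])
    have "Re (conjugate v \<bullet> (four_block_mat A2 Bc Bc A2 *\<^sub>v v)) =
        Re (conjugate x \<bullet> (A *\<^sub>v x)) / 2 + Re (conjugate y \<bullet> (A *\<^sub>v y)) / 2
        + c * Re (conjugate x \<bullet> (B *\<^sub>v y) + conjugate y \<bullet> (B *\<^sub>v x))"
      unfolding qM by (simp add: algebra_simps)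
    also have "c * Re (conjugate x \<bullet> (B *\<^sub>v y) + conjugate y \<bullet> (B *\<^sub>v x)) =
        c * Re (conjugate (x + y) \<bullet> (B *\<^sub>v (x + y))) - c * Re (conjugate x \<bullet> (B *\<^sub>v x)) - c * Re (conjugate y \<bullet> (B *\<^sub>v y))"
      unfolding qB2 by (simp add: algebra_simps)
    finally show "0 \<le> Re (conjugate v \<bullet> (four_block_mat A2 Bc Bc A2 *\<^sub>v v))"
      using p1 p2 p3 by linarith
  qed
qed





lemma sum_block_shift: fixes m b :: nat shows "(\<Sum>k\<in>{m*b..<m*b+b}. g k) = (\<Sum>q<b. g (m*b+q))"
proof -
  have "(\<Sum>k\<in>{m*b..<m*b+b}. g k) = (\<Sum>k\<in>{0+m*b..<b+m*b}. g k)" by (simp add: add.commute)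
  also have "\<dots> = (\<Sum>q\<in>{0..<b}. g (q + m*b))" by (rule sum.shift_bounds_nat_ivl)
  finally show ?thesis by (simp add: atLeast0LessThan add.commute)
qed

lemma sum_divmod: fixes a b :: nat shows "(\<Sum>k<a*b. f (k div b) (k mod b)) = (\<Sum>p<a. \<Sum>q<b. f p q)"
proof -
  have "(\<Sum>k<a*b. f (k div b) (k mod b)) = (\<Sum>m<a. \<Sum>k\<in>{m*b..<m*b+b}. f (k div b) (k mod b))"
    by (rule sum.nat_group[symmetric])
  also have "\<dots> = (\<Sum>m<a. \<Sum>q<b. f ((m*b+q) div b) ((m*b+q) mod b))"
    by (simp only: sum_block_shift)
  also have "\<dots> = (\<Sum>p<a. \<Sum>q<b. f p q)"
    by (intro sum.cong refl) simp
  finally show ?thesis .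
qed

lemma sum_split2: fixes n :: nat shows "(\<Sum>k<n+n. g k) = (\<Sum>k<n. g k) + (\<Sum>k<n. g (n + k))"
proof -
  have "(\<Sum>k<n+n. g k) = (\<Sum>k\<in>{0..<n}. g k) + (\<Sum>k\<in>{n..<n+n}. g k)"
    by (simp add: atLeast0LessThan[symmetric] sum.atLeastLessThan_concat)
  also have "(\<Sum>k\<in>{n..<n+n}. g k) = (\<Sum>k<n. g (n + k))"
    using sum_block_shift[where m=1 and b=n and g=g] by simp
  finally show ?thesis by (simp add: atLeast0LessThan)
qed

lemma kron_dims[simp]: "dim_row (kron A B) = dim_row A * dim_row B" "dim_col (kron A B) = dim_col A * dim_col B"
  unfolding kron_def by simp_all

lemma kron_index: "i < dim_row A * dim_row B \<Longrightarrow> j < dim_col A * dim_col B \<Longrightarrow>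
  kron A B $$ (i,j) = A $$ (i div dim_row B, j div dim_col B) * B $$ (i mod dim_row B, j mod dim_col B)"
  unfolding kron_def by simp

lemma kron_carrier: "A \<in> carrier_mat a1 a2 \<Longrightarrow> B \<in> carrier_mat b1 b2 \<Longrightarrow> kron A B \<in> carrier_mat (a1*b1) (a2*b2)"
  by (intro carrier_matI) (simp_all add: carrier_matD)

lemma div_lt: "(i::nat) < a * b \<Longrightarrow> i div b < a"
  by (simp add: less_mult_imp_div_less)

lemma mod_lt: "(i::nat) < a * b \<Longrightarrow> i mod b < b"
  by (metis mod_less_divisor mult_0_right neq0_conv not_less_zero)

lemma kron_mult: assumes A: "A \<in> carrier_mat a1 a2" and B: "B \<in> carrier_mat b1 b2"
  and C: "C \<in> carrier_mat a2 a3" and D: "D \<in> carrier_mat b2 b3"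
  shows "kron A B * kron C D = kron (A * C) (B * D)"
proof (rule eq_matI)
  have dA: "dim_row A = a1" "dim_col A = a2" using A by auto
  have dB: "dim_row B = b1" "dim_col B = b2" using B by auto
  have dC: "dim_row C = a2" "dim_col C = a3" using C by auto
  have dD: "dim_row D = b2" "dim_col D = b3" using D by auto
  fix i j assume i: "i < dim_row (kron (A * C) (B * D))" and j: "j < dim_col (kron (A * C) (B * D))"
  then have i': "i < a1 * b1" and j': "j < a3 * b3" using dA dB dC dD by auto
  have "(kron A B * kron C D) $$ (i, j) = (\<Sum>k<a2*b2. kron A B $$ (i,k) * kron C D $$ (k,j))"
    using i' j' dA dB dC dD by (simp add: scalar_prod_def atLeast0LessThan)
  also have "\<dots> = (\<Sum>k<a2*b2. (A $$ (i div b1, k div b2) * C $$ (k div b2, j div b3)) *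
                                (B $$ (i mod b1, k mod b2) * D $$ (k mod b2, j mod b3)))"
  proof (intro sum.cong refl)
    fix k assume "k \<in> {..<a2*b2}"
    then have k: "k < a2 * b2" by simp
    show "kron A B $$ (i,k) * kron C D $$ (k,j) = (A $$ (i div b1, k div b2) * C $$ (k div b2, j div b3)) *
                                (B $$ (i mod b1, k mod b2) * D $$ (k mod b2, j mod b3))"
      using i' j' k dA dB dC dD by (simp add: kron_index mult_ac)
  qed
  also have "\<dots> = (\<Sum>p<a2. \<Sum>q<b2. (A $$ (i div b1, p) * C $$ (p, j div b3)) *
                                (B $$ (i mod b1, q) * D $$ (q, j mod b3)))"
    by (rule sum_divmod)
  also have "\<dots> = (\<Sum>p<a2. A $$ (i div b1, p) * C $$ (p, j div b3)) * (\<Sum>q<b2. B $$ (i mod b1, q) * D $$ (q, j mod b3))"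
    by (simp add: sum_product)
  also have "\<dots> = kron (A * C) (B * D) $$ (i, j)"
    using i' j' dA dB dC dD div_lt[OF i'] div_lt[OF j'] mod_lt[OF i'] mod_lt[OF j']
    by (simp add: kron_index scalar_prod_def atLeast0LessThan)
  finally show "(kron A B * kron C D) $$ (i, j) = kron (A * C) (B * D) $$ (i, j)" .
next
  show "dim_row (kron A B * kron C D) = dim_row (kron (A * C) (B * D))" by simp
  show "dim_col (kron A B * kron C D) = dim_col (kron (A * C) (B * D))" by simp
qed

lemma kron_adj: "mat_adjoint (kron A B) = kron (mat_adjoint A) (mat_adjoint B)"
proof (rule eq_matI)
  fix i j assume i: "i < dim_row (kron (mat_adjoint A) (mat_adjoint B))" and j: "j < dim_col (kron (mat_adjoint A) (mat_adjoint B))"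
  then have i': "i < dim_col A * dim_col B" and j': "j < dim_row A * dim_row B" by auto
  show "mat_adjoint (kron A B) $$ (i, j) = kron (mat_adjoint A) (mat_adjoint B) $$ (i, j)"
    using i' j' div_lt[OF i'] div_lt[OF j'] mod_lt[OF i'] mod_lt[OF j'] by (simp add: kron_index)
qed simp_all

lemma kron_one: "kron (1\<^sub>m a) (1\<^sub>m b) = 1\<^sub>m (a * b)"
proof (rule eq_matI)
  fix i j assume i: "i < dim_row (1\<^sub>m (a * b) :: complex mat)" and j: "j < dim_col (1\<^sub>m (a * b) :: complex mat)"
  then have i': "i < a * b" and j': "j < a * b" by auto
  have iff: "(i div b = j div b \<and> i mod b = j mod b) = (i = j)"
    by (metis div_mult_mod_eq)
  show "kron (1\<^sub>m a) (1\<^sub>m b) $$ (i, j) = 1\<^sub>m (a * b) $$ (i, j)"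
    using i' j' div_lt[OF i'] div_lt[OF j'] mod_lt[OF i'] mod_lt[OF j'] iff
    by (auto simp: kron_index)
qed simp_all



lemma less2: "(i::nat) < 2 \<Longrightarrow> i = 0 \<or> i = 1" by auto

lemma sum2: "(\<Sum>k<(2::nat). f k) = f 0 + (f 1 :: complex)"
  by (simp add: numeral_2_eq_2)

lemma X_carrier[simp]: "pauli_X \<in> carrier_mat 2 2" unfolding pauli_X_def by simp
lemma Z_carrier[simp]: "pauli_Z \<in> carrier_mat 2 2" unfolding pauli_Z_def by simp

lemma X_dims[simp]: "dim_row pauli_X = 2" "dim_col pauli_X = 2" unfolding pauli_X_def by simp_all
lemma Z_dims[simp]: "dim_row pauli_Z = 2" "dim_col pauli_Z = 2" unfolding pauli_Z_def by simp_all

lemma X_index: "i < 2 \<Longrightarrow> j < 2 \<Longrightarrow> pauli_X $$ (i,j) = (if i \<noteq> j then 1 else 0)"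
  unfolding pauli_X_def by simp
lemma Z_index: "i < 2 \<Longrightarrow> j < 2 \<Longrightarrow> pauli_Z $$ (i,j) = (if i = j then (if i = 0 then 1 else -1) else 0)"
  unfolding pauli_Z_def by simp

lemma mat2_eqI: assumes "dim_row A = 2" "dim_col A = 2" "dim_row B = 2" "dim_col B = 2"
  "A $$ (0,0) = B $$ (0,0)" "A $$ (0,1) = B $$ (0,1)" "A $$ (1,0) = B $$ (1,0)" "A $$ (1,1) = B $$ (1,1)"
  shows "A = (B :: complex mat)"
proof (rule eq_matI)
  fix i j assume "i < dim_row B" "j < dim_col B"
  then have "i < 2" "j < 2" using assms by auto
  then show "A $$ (i,j) = B $$ (i,j)" using assms(5-8) less2[of i] less2[of j] by auto
qed (use assms in auto)

lemma mult2_index: "A \<in> carrier_mat 2 2 \<Longrightarrow> B \<in> carrier_mat 2 2 \<Longrightarrow> i < 2 \<Longrightarrow> j < 2 \<Longrightarrow>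
   (A * B) $$ (i,j) = A $$ (i,0) * B $$ (0,j) + A $$ (i,1) * (B $$ (1,j) :: complex)"
  by (simp add: scalar_prod_def atLeast0LessThan sum2)

lemma adjX: "mat_adjoint pauli_X = pauli_X"
  by (rule mat2_eqI) (simp_all add: X_index)
lemma adjZ: "mat_adjoint pauli_Z = pauli_Z"
  by (rule mat2_eqI) (simp_all add: Z_index)
lemma XX: "pauli_X * pauli_X = 1\<^sub>m 2"
  by (rule mat2_eqI) (simp_all add: scalar_prod_def atLeast0LessThan sum2 X_index)
lemma ZZ: "pauli_Z * pauli_Z = 1\<^sub>m 2"
  by (rule mat2_eqI) (simp_all add: scalar_prod_def atLeast0LessThan sum2 Z_index)

definition gate :: "bool \<Rightarrow> bool \<Rightarrow> complex mat" where
  "gate a b = (if a then pauli_X else 1\<^sub>m 2) * (if b then pauli_Z else 1\<^sub>m 2)"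

lemma gate_carrier: "gate a b \<in> carrier_mat 2 2"
  unfolding gate_def by (rule mult_carrier_mat) auto

lemma gate_unitary: "mat_adjoint (gate a b) * gate a b = 1\<^sub>m 2"
proof -
  define X' where "X' = (if a then pauli_X else 1\<^sub>m 2)"
  define Z' where "Z' = (if b then pauli_Z else 1\<^sub>m 2)"
  have X'c: "X' \<in> carrier_mat 2 2" and Z'c: "Z' \<in> carrier_mat 2 2" unfolding X'_def Z'_def by auto
  have aX: "mat_adjoint X' = X'" "X' * X' = 1\<^sub>m 2" unfolding X'_def using adjX XX by auto
  have aZ: "mat_adjoint Z' = Z'" "Z' * Z' = 1\<^sub>m 2" unfolding Z'_def using adjZ ZZ by auto
  have "mat_adjoint (gate a b) * gate a b = Z' * X' * (X' * Z')"
    unfolding gate_def X'_def[symmetric] Z'_def[symmetric] adj_mult[OF X'c Z'c] aX aZ ..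
  also have "\<dots> = Z' * (X' * X') * Z'"
    using X'c Z'c by (simp add: assoc_mult_mat[of _ 2 2 _ 2 _ 2])
  also have "\<dots> = 1\<^sub>m 2" using aX aZ Z'c by simp
  finally show ?thesis .
qed

lemma pauli_op_props: "pauli_op ks \<in> carrier_mat (2^(length ks div 2)) (2^(length ks div 2)) \<and>
   mat_adjoint (pauli_op ks) * pauli_op ks = 1\<^sub>m (2^(length ks div 2))"
proof (induction ks rule: pauli_op.induct)
  case 1
  then show ?case by simp
next
  case (2 a)
  then show ?case by simp
next
  case (3 a b ks)
  define n :: nat where "n = 2^(length ks div 2)"
  have Pc: "pauli_op ks \<in> carrier_mat n n" and Pu: "mat_adjoint (pauli_op ks) * pauli_op ks = 1\<^sub>m n"
    using 3 unfolding n_def by auto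
  have e: "2^(length (a # b # ks) div 2) = 2 * n" unfolding n_def by simp
  have op: "pauli_op (a # b # ks) = kron (gate a b) (pauli_op ks)" unfolding gate_def by simp
  have c: "pauli_op (a # b # ks) \<in> carrier_mat (2 * n) (2 * n)"
    unfolding op by (rule kron_carrier[OF gate_carrier Pc])
  have "mat_adjoint (pauli_op (a # b # ks)) * pauli_op (a # b # ks) =
      kron (mat_adjoint (gate a b) * gate a b) (mat_adjoint (pauli_op ks) * pauli_op ks)"
    unfolding op kron_adj
    by (rule kron_mult) (use gate_carrier Pc in auto)
  also have "\<dots> = 1\<^sub>m (2 * n)" unfolding gate_unitary Pu kron_one ..
  finally show ?case unfolding e using c by simp
qed





lemma perm_props: assumes p: "\<sigma> permutes {..<N}"
  shows "perm_mat N \<sigma> \<in> carrier_mat N N" "mat_adjoint (perm_mat N \<sigma>) * perm_mat N \<sigma> = 1\<^sub>m N"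
proof -
  show c: "perm_mat N \<sigma> \<in> carrier_mat N N" unfolding perm_mat_def by simp
  show "mat_adjoint (perm_mat N \<sigma>) * perm_mat N \<sigma> = 1\<^sub>m N"
  proof (rule eq_matI)
    fix i j assume "i < dim_row (1\<^sub>m N :: complex mat)" "j < dim_col (1\<^sub>m N :: complex mat)"
    then have i: "i < N" and j: "j < N" by auto
    have si: "\<sigma> i < N" using permutes_in_image[OF p, of i] i by simp
    have inj: "\<sigma> i = \<sigma> j \<longleftrightarrow> i = j" using permutes_inj[OF p] by (auto dest: injD)
    have "(mat_adjoint (perm_mat N \<sigma>) * perm_mat N \<sigma>) $$ (i, j) =
        (\<Sum>k<N. cnj (perm_mat N \<sigma> $$ (k, i)) * perm_mat N \<sigma> $$ (k, j))"
      using i j c by (simp add: scalar_prod_def atLeast0LessThan)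
    also have "\<dots> = (\<Sum>k<N. if k = \<sigma> i then (if \<sigma> i = \<sigma> j then 1 else 0) else 0)"
      using i j by (intro sum.cong refl) (auto simp: perm_mat_def)
    also have "\<dots> = (if i = j then 1 else 0)" using si inj by simp
    finally show "(mat_adjoint (perm_mat N \<sigma>) * perm_mat N \<sigma>) $$ (i, j) = 1\<^sub>m N $$ (i, j)"
      using i j by simp
  qed (use c in auto)
qed

lemma isoV_carrier: assumes "d2 \<le> d1" shows "iso_V d1 d2 \<in> carrier_mat (2^d1) (2^d2)"
proof -
  have "iso_V d1 d2 \<in> carrier_mat (2^d2 * 2^(d1-d2)) (2^d2 * 1)"
    unfolding iso_V_def by (rule kron_carrier) (auto simp: ket0_def)
  moreover have "(2::nat)^d2 * 2^(d1-d2) = 2^d1" using assms by (simp add: power_add[symmetric])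
  ultimately show ?thesis by simp
qed

lemma mtrace_four_block: assumes A: "A \<in> carrier_mat n n" and D: "D \<in> carrier_mat n n"
  shows "mtrace (four_block_mat A B C D) = mtrace A + mtrace D"
proof -
  have "mtrace (four_block_mat A B C D) = (\<Sum>k<n+n. four_block_mat A B C D $$ (k,k))"
    unfolding mtrace_def using A D by simp
  also have "\<dots> = (\<Sum>k<n. four_block_mat A B C D $$ (k,k)) + (\<Sum>k<n. four_block_mat A B C D $$ (n+k,n+k))"
    by (rule sum_split2)
  also have "\<dots> = mtrace A + mtrace D"
    unfolding mtrace_def using A D by simp
  finally show ?thesis .
qed

lemma mtrace_smult: "A \<in> carrier_mat n n \<Longrightarrow> mtrace (c \<cdot>\<^sub>m A) = c * mtrace A"
  unfolding mtrace_def by (simp add: sum_distrib_left)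

lemma psd_zero: "psd_mat n (0\<^sub>m n n)"
  unfolding psd_iff_Re
proof (intro conjI ballI)
  fix v :: "complex Matrix.vec" assume v: "v \<in> carrier_vec n"
  show "0 \<le> Re (conjugate v \<bullet> (0\<^sub>m n n *\<^sub>v v))" unfolding qf_sum[OF zero_carrier_mat v v] by simp
qed simp_all

lemma zero_smult_zero: "(c \<cdot>\<^sub>m 0\<^sub>m n n :: complex mat) = 0\<^sub>m n n"
  by (rule eq_matI) simp_all

theorem corollary5:
  fixes d1 d2 \<eta> :: nat and \<epsilon> :: real
    and Mo Mc :: "complex mat" and k k' :: "bool list" and \<sigma> :: "nat \<Rightarrow> nat"
  assumes "d1 \<ge> d2" and "d2 \<ge> 1"
    and "\<epsilon> > 0" and "\<eta> > 0" and "1 / real \<eta> < \<epsilon>"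
    and "density_mat (2^d1) Mo" and "pd_mat (2^d1) Mo"
    and "density_mat (2^d2) Mc"
    and "length k = 2 * d1" and "length k' = 2 * d2"
    and "\<sigma> permutes {..<2^(d1+1)}"
  defines "Mo' \<equiv> pauli_op k * Mo * mat_adjoint (pauli_op k)"
    and "Mc' \<equiv> pauli_op k' * Mc * mat_adjoint (pauli_op k')"
  defines "Mc'' \<equiv> iso_V d1 d2 * Mc' * mat_adjoint (iso_V d1 d2)"
  defines "Ma0 \<equiv> four_block_mat ((1/2) \<cdot>\<^sub>m Mo') (0\<^sub>m (2^d1) (2^d1))
                                  (0\<^sub>m (2^d1) (2^d1)) ((1/2) \<cdot>\<^sub>m Mo')"
    and "Ma1 \<equiv> four_block_mat ((1/2) \<cdot>\<^sub>m Mo') (complex_of_real (1 / real \<eta>) \<cdot>\<^sub>m Mc'')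
                  (complex_of_real (1 / real \<eta>) \<cdot>\<^sub>m mat_adjoint Mc'') ((1/2) \<cdot>\<^sub>m Mo')"
  defines "Mf0 \<equiv> perm_mat (2^(d1+1)) \<sigma> * Ma0 * mat_adjoint (perm_mat (2^(d1+1)) \<sigma>)"
    and "Mf1 \<equiv> perm_mat (2^(d1+1)) \<sigma> * Ma1 * mat_adjoint (perm_mat (2^(d1+1)) \<sigma>)"
  assumes "2 * lambda_max Mc'' / lambda_min Mo' \<le> real \<eta>"
  shows "density_mat (2^(d1+1)) Mf0 \<and> density_mat (2^(d1+1)) Mf1"
proof -
  define N :: nat where "N = 2^d1"
  define m :: nat where "m = 2^d2"
  have Np: "N > 0" unfolding N_def by simp
  have N2: "(2::nat)^(d1+1) = N + N" unfolding N_def by simp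
  have lk: "length k div 2 = d1" using assms(9) by simp
  have lk': "length k' div 2 = d2" using assms(10) by simp
  have Poc: "pauli_op k \<in> carrier_mat N N" and Pou: "mat_adjoint (pauli_op k) * pauli_op k = 1\<^sub>m N"
    using pauli_op_props[of k] unfolding lk N_def by auto
  have Pou2: "pauli_op k * mat_adjoint (pauli_op k) = 1\<^sub>m N"
    by (rule mat_mult_left_right_inverse[OF adj_carrier[OF Poc] Poc Pou])
  have Pcc: "pauli_op k' \<in> carrier_mat m m"
    using pauli_op_props[of k'] unfolding lk' m_def by auto
  have Vc: "iso_V d1 d2 \<in> carrier_mat N m" unfolding N_def m_def by (rule isoV_carrier[OF assms(1)])
  have Mo_psd: "psd_mat N Mo" and Mo_tr: "mtrace Mo = 1" and Mo_pd: "pd_mat N Mo"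
    using assms(6,7) unfolding density_mat_def N_def by auto
  have Moc: "Mo \<in> carrier_mat N N" using Mo_pd unfolding pd_mat_def by auto
  have Mc_psd: "psd_mat m Mc" using assms(8) unfolding density_mat_def m_def by auto
  have Mo'_pd: "pd_mat N Mo'" unfolding Mo'_def by (rule pd_conj[OF Mo_pd Poc Pou2])
  have Mo'c: "Mo' \<in> carrier_mat N N" and hMo': "mat_adjoint Mo' = Mo'"
    using Mo'_pd unfolding pd_mat_def by auto
  have Mo'_tr: "mtrace Mo' = 1" unfolding Mo'_def mtrace_conj[OF Moc Poc Pou] by (rule Mo_tr)
  have Mc'_psd: "psd_mat m Mc'" unfolding Mc'_def by (rule psd_conj[OF Mc_psd Pcc])
  have Mc''_psd: "psd_mat N Mc''" unfolding Mc''_def by (rule psd_conj[OF Mc'_psd Vc])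
  define lm where "lm = lambda_min Mo'"
  have lmp: "lm > 0" unfolding lm_def by (rule lambda_min_bound(1)[OF Mo'_pd Np])
  have lmb: "\<And>v. v \<in> carrier_vec N \<Longrightarrow> lm * nsq N (($) v) \<le> Re (conjugate v \<bullet> (Mo' *\<^sub>v v))"
    unfolding lm_def by (rule lambda_min_bound(2)[OF Mo'_pd Np])
  have qA0: "0 \<le> Re (conjugate v \<bullet> (Mo' *\<^sub>v v))" if "v \<in> carrier_vec N" for v
    using lmb[OF that] lmp nsq_nonneg[of N "($) v"] by (meson mult_nonneg_nonneg order_trans less_imp_le)
  define c where "c = 1 / real \<eta>"
  have cp: "c > 0" unfolding c_def using assms(4) by simp
  have hyp: "lambda_max Mc'' \<le> real \<eta> * lm / 2"
  proof -
    have "2 * lambda_max Mc'' / lm \<le> real \<eta>" unfolding lm_def by (rule \<open>2 * lambda_max Mc'' / lambda_min Mo' \<le> real \<eta>\<close>)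
    then have "2 * lambda_max Mc'' \<le> real \<eta> * lm" using lmp by (simp add: divide_le_eq)
    then show ?thesis by simp
  qed
  have clm: "c * lambda_max Mc'' \<le> lm / 2"
  proof -
    have "c * lambda_max Mc'' \<le> c * (real \<eta> * lm / 2)" using hyp cp by (simp add: mult_left_mono)
    also have "\<dots> = lm / 2" unfolding c_def using assms(4) by simp
    finally show ?thesis .
  qed
  have bd: "c * Re (conjugate x \<bullet> (Mc'' *\<^sub>v x)) \<le> Re (conjugate x \<bullet> (Mo' *\<^sub>v x)) / 2"
    if x: "x \<in> carrier_vec N" for x
  proof -
    have ns: "nsq N (($) x) \<ge> 0" by (rule nsq_nonneg)
    from lambda_max_bound[OF Mc''_psd Np]
    show ?thesis
    proof
      assume "\<forall>v\<in>carrier_vec N. Re (conjugate v \<bullet> (Mc'' *\<^sub>v v)) \<le> lambda_max Mc'' * nsq N (($) v)"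
      then have "Re (conjugate x \<bullet> (Mc'' *\<^sub>v x)) \<le> lambda_max Mc'' * nsq N (($) x)" using x by blast
      then have "c * Re (conjugate x \<bullet> (Mc'' *\<^sub>v x)) \<le> c * (lambda_max Mc'' * nsq N (($) x))"
        using cp by (simp add: mult_left_mono)
      also have "\<dots> = (c * lambda_max Mc'') * nsq N (($) x)" by simp
      also have "\<dots> \<le> (lm / 2) * nsq N (($) x)" using clm ns by (rule mult_right_mono)
      also have "\<dots> \<le> Re (conjugate x \<bullet> (Mo' *\<^sub>v x)) / 2" using lmb[OF x] by simp
      finally show ?thesis .
    next
      assume "\<forall>v\<in>carrier_vec N. Re (conjugate v \<bullet> (Mc'' *\<^sub>v v)) = 0"
      then show ?thesis using x qA0[OF x] by simp
    qed
  qed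
  have Ma1_psd: "psd_mat (N + N) Ma1"
    unfolding Ma1_def c_def[symmetric] N_def[symmetric]
    by (rule block_psd[OF Mo'c hMo' Mc''_psd _ bd]) (use cp in simp_all)
  have bd0: "0 * Re (conjugate x \<bullet> (0\<^sub>m N N *\<^sub>v x)) \<le> Re (conjugate x \<bullet> (Mo' *\<^sub>v x)) / 2"
    if x: "x \<in> carrier_vec N" for x
    using qA0[OF x] by simp
  have Ma0_psd: "psd_mat (N + N) Ma0"
    using block_psd[OF Mo'c hMo' psd_zero[of N] order_refl bd0]
    unfolding Ma0_def N_def[symmetric] by (simp add: zero_smult_zero)
  have Ma0c: "Ma0 \<in> carrier_mat (N + N) (N + N)" using Ma0_psd unfolding psd_mat_def by auto
  have Ma1c: "Ma1 \<in> carrier_mat (N + N) (N + N)" using Ma1_psd unfolding psd_mat_def by auto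
  have hc: "(1/2::complex) \<cdot>\<^sub>m Mo' \<in> carrier_mat N N" using Mo'c by simp
  have tr0: "mtrace Ma0 = 1"
    unfolding Ma0_def N_def[symmetric] mtrace_four_block[OF hc hc] mtrace_smult[OF Mo'c] Mo'_tr by simp
  have tr1: "mtrace Ma1 = 1"
    unfolding Ma1_def N_def[symmetric] mtrace_four_block[OF hc hc] mtrace_smult[OF Mo'c] Mo'_tr by simp
  define P where "P = perm_mat (2^(d1+1)) \<sigma>"
  have Pc: "P \<in> carrier_mat (N + N) (N + N)" and Pu: "mat_adjoint P * P = 1\<^sub>m (N + N)"
    using perm_props[OF assms(11)] unfolding P_def N2 by auto
  have "density_mat (N + N) Mf0"
    unfolding density_mat_def Mf0_def P_def[symmetric]
    using psd_conj[OF Ma0_psd Pc] mtrace_conj[OF Ma0c Pc Pu] tr0 by simp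
  moreover have "density_mat (N + N) Mf1"
    unfolding density_mat_def Mf1_def P_def[symmetric]
    using psd_conj[OF Ma1_psd Pc] mtrace_conj[OF Ma1c Pc Pu] tr1 by simp
  ultimately show ?thesis unfolding N2 by simp
qed


end
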